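(* Assume conditions (A), (C) and (D). Fix $T>0$, let $\delta_k>0$ with $\delta_k\to0$, and for each $k$ let $\tau_k$ be a stopping time (with respect to the filtration generated by $(Y_k(t))_{t\ge0}$) with $0\le\tau_k<\tau_k+\delta_k\le T$. Then there is a constant $K_3\ge0$ such that $\mathbf{E}[Y_k(\tau_k)]\le K_3$ and $\mathbf{E}[Y_k(\tau_k+\delta_k)]\le K_3$ for all $k\ge1$.
   Context: Model: for each $k\ge1$, let $\{\xi^{(k)}_{n,i}:n\ge0,i\ge1\}$ be i.i.d. $\mathbb{N}$-valued random variables with probability generating function $g_k$. For each $k$ and $n\ge0$ let $\{\psi^{(n)}_k(i):i\ge0\}$ be an $\mathbb{N}$-valued random function with $\psi^{(n)}_k(i)$ having probability generating function $h_k^{(i)}$; these random functions are i.i.d. in $n$ and independent of the offspring; $Z_k(0)$ is $\mathbb{N}$-valued and independent of everything else. $\phi_k^{(n)}(i)=i+\psi_k^{(n)}(i)$, $Z_k(n+1)=\sum_{i=1}^{\phi_k^{(n)}(Z_k(n))}\xi^{(k)}_{n,i}$. $\gamma_k$ positive constants increasing to $\infty$; $Y_k(t)=Z_k(\lfloor\gamma_kt\rfloor)/k$. Parameters: $b\in\mathbb{R}$, $c\ge0$, $m$ a measure on $(0,\infty)$ with $\int(z\wedge z^2)m(dz)<\infty$; $R(\lambda)=b\lambda+c\lambda^2+\int_0^\infty(e^{-\lambda z}-1+\lambda z)m(dz)$; $R_k(\lambda)=k\gamma_k[g_k(1-\lambda/k)-(1-\lambda/k)]$, $F_k(\lambda,x)=\gamma_k[h_k^{(\lfloor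 kx\rfloor)}(1-\lambda/k)-(1-\lambda/k)]$ for $0\le\lambda\le k$. Conditions: (A) $(R_k)$ is uniformly Lipschitz on each bounded interval and $R_k\to R$; (C) there is $K_1>0$ with $\frac{\gamma_k}{k}(h_k^{(\lfloor kx\rfloor)})'(1-)\le K_1(1+x)$ for all $x\ge0,k\ge1$; (D) $\sup_{k\ge1}\mathbf{E}[Y_k(0)]<\infty$. *)

theory Defs
  imports "HOL-Probability.Probability"
begin

definition has_pgf :: "'a measure \<Rightarrow> ('a \<Rightarrow> nat) \<Rightarrow> (real \<Rightarrow> real) \<Rightarrow> bool" where
  "has_pgf M X g \<longleftrightarrow> (\<forall>s\<in>{0..1}. g s = (\<integral>\<omega>. s ^ X \<omega> \<partial>M))"

text \<open>Index set of the basic random ingredients for a fixed k: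
  offspring variables xi_(n,i) (i >= 1), random immigration functions psi^(n), initial value.\<close>
datatype src = Off nat nat | Imm nat | Init

definition src_index :: "src set" where
  "src_index = {Off n i | n i. 1 \<le> i} \<union> range Imm \<union> {Init}"

text \<open>All ingredients viewed as random elements of nat => nat (product sigma-algebra);
  a nat-valued variable is embedded as a constant function (same generated sigma-algebra).\<close>
definition src_var :: "(nat \<Rightarrow> nat \<Rightarrow> 'a \<Rightarrow> nat) \<Rightarrow> (nat \<Rightarrow> nat \<Rightarrow> 'a \<Rightarrow> nat) \<Rightarrow> ('a \<Rightarrow> nat)
    \<Rightarrow> src \<Rightarrow> 'a \<Rightarrow> nat \<Rightarrow> nat" where
  "src_var \<xi> \<psi> Z0 j = (case j of
       Off n i \<Rightarrow> (\<lambda>\<omega> _. \<xi> n i \<omega>)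
     | Imm n \<Rightarrow> (\<lambda>\<omega> i. \<psi> n i \<omega>)
     | Init \<Rightarrow> (\<lambda>\<omega> _. Z0 \<omega>))"

abbreviation natfun_space :: "(nat \<Rightarrow> nat) measure" where
  "natfun_space \<equiv> PiM UNIV (\<lambda>_. count_space UNIV)"

primrec Zproc :: "(nat \<Rightarrow> nat \<Rightarrow> 'a \<Rightarrow> nat) \<Rightarrow> (nat \<Rightarrow> nat \<Rightarrow> 'a \<Rightarrow> nat) \<Rightarrow> ('a \<Rightarrow> nat)
    \<Rightarrow> nat \<Rightarrow> 'a \<Rightarrow> nat" where
  "Zproc \<xi> \<psi> Z0 0 \<omega> = Z0 \<omega>"
| "Zproc \<xi> \<psi> Z0 (Suc n) \<omega> =
     (\<Sum>i\<in>{1..Zproc \<xi> \<psi> Z0 n \<omega> + \<psi> n (Zproc \<xi> \<psi> Z0 n \<omega>) \<omega>}. \<xi> n i \<omega>)"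

definition Yproc :: "nat \<Rightarrow> real \<Rightarrow> (nat \<Rightarrow> 'a \<Rightarrow> nat) \<Rightarrow> real \<Rightarrow> 'a \<Rightarrow> real" where
  "Yproc k \<gamma> Z t \<omega> = real (Z (nat \<lfloor>\<gamma> * t\<rfloor>) \<omega>) / real k"

definition nat_filtration :: "'a measure \<Rightarrow> (real \<Rightarrow> 'a \<Rightarrow> real) \<Rightarrow> real \<Rightarrow> 'a measure" where
  "nat_filtration M Y t =
     sigma (space M) {Y s -` A \<inter> space M | s A. 0 \<le> s \<and> s \<le> t \<and> A \<in> sets borel}"

definition Rk :: "nat \<Rightarrow> real \<Rightarrow> (real \<Rightarrow> real) \<Rightarrow> real \<Rightarrow> real" where
  "Rk k \<gamma> g l = real k * \<gamma> * (g (1 - l / real k) - (1 - l / real k))"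

definition Rlim :: "real \<Rightarrow> real \<Rightarrow> real measure \<Rightarrow> real \<Rightarrow> real" where
  "Rlim b c m l = b * l + c * l^2 + (\<integral>z. exp (- l * z) - 1 + l * z \<partial>m)"

end

theory Submission
  imports Defs
begin


lemma meas_nat_add:
  fixes f g :: "'a \<Rightarrow> nat"
  assumes "f \<in> measurable M (count_space UNIV)" "g \<in> measurable M (count_space UNIV)"
  shows "(\<lambda>x. f x + g x) \<in> measurable M (count_space UNIV)"
proof -
  have "(\<lambda>x. (\<lambda>a x. a + g x) (f x) x) \<in> measurable M (count_space UNIV)"
  proof (rule measurable_compose_countable[OF _ assms(1)])
    fix a :: nat
    show "(\<lambda>x. a + g x) \<in> measurable M (count_space UNIV)"
      using measurable_compose[OF assms(2), of "\<lambda>b. a + b" "count_space UNIV"] by (simp add: comp_def)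
  qed
  then show ?thesis by simp
qed

lemma meas_nat_sum:
  fixes f :: "nat \<Rightarrow> 'a \<Rightarrow> nat"
  assumes "\<And>i. i \<in> {1..N} \<Longrightarrow> f i \<in> measurable M (count_space UNIV)"
  shows "(\<lambda>x. \<Sum>i\<in>{1..N}. f i x) \<in> measurable M (count_space UNIV)"
  using assms
proof (induction N)
  case 0 then show ?case by simp
next
  case (Suc N)
  have e: "(\<lambda>x. \<Sum>i\<in>{1..Suc N}. f i x) = (\<lambda>x. (\<Sum>i\<in>{1..N}. f i x) + f (Suc N) x)"
    by (simp add: add.commute)
  show ?case unfolding e
    by (rule meas_nat_add) (use Suc in auto)
qed

lemma geom_id: "(1 - (s::real)) * (\<Sum>j<n. s^j) = 1 - s^n"
  by (simp add: one_diff_power_eq)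

lemma pt_bound:
  fixes s :: real assumes "0 \<le> s" "s \<le> 1"
  shows "(1 - s) * s^J * real (min X J) \<le> 1 - s^X"
proof -
  have "s^J * real (min X J) = (\<Sum>j<min X J. s^J)" by simp
  also have "\<dots> \<le> (\<Sum>j<min X J. s^j)"
    by (rule sum_mono) (simp add: assms power_decreasing)
  also have "\<dots> \<le> (\<Sum>j<X. s^j)"
    by (rule sum_mono2) (auto simp: assms)
  finally have "(1 - s) * (s^J * real (min X J)) \<le> (1-s) * (\<Sum>j<X. s^j)"
    by (rule mult_left_mono) (use assms in auto)
  then show ?thesis by (simp add: geom_id mult.assoc)
qed

lemma pgf_mean_bound:
  fixes X :: "'a \<Rightarrow> nat" and g :: "real \<Rightarrow> real"
  assumes P: "prob_space M" and Xm: "X \<in> measurable M (count_space UNIV)"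
    and pgf: "has_pgf M X g"
    and H: "\<And>e. 0 < e \<Longrightarrow> \<exists>s0<1. \<forall>s. s0 < s \<and> s < 1 \<longrightarrow> 1 - g s \<le> (B + e) * (1 - s)"
  shows "(\<integral>\<^sup>+\<omega>. of_nat (X \<omega>) \<partial>M) \<le> ennreal B"
proof -
  interpret prob_space M by (rule P)
  define e where "e J = (\<integral>\<omega>. real (min (X \<omega>) J) \<partial>M)" for J
  have mc: "(\<lambda>\<omega>. f (X \<omega>)) \<in> borel_measurable M" for f :: "nat \<Rightarrow> real"
    using measurable_compose[OF Xm, of f borel] by (simp add: comp_def)
  have intm: "integrable M (\<lambda>\<omega>. real (min (X \<omega>) J))" for J
    by (rule integrable_const_bound[where B="real J"]) (auto intro: mc)
  have intp: "integrable M (\<lambda>\<omega>. s ^ X \<omega>)" if "0 \<le> s" "s \<le> 1" for s :: real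
    by (rule integrable_const_bound[where B=1]) (use that in \<open>auto intro: mc power_le_one\<close>)
  have step1: "(1 - s) * s^J * e J \<le> 1 - g s" if s: "0 \<le> s" "s \<le> 1" for s J
  proof -
    have "(1 - s) * s^J * e J = (\<integral>\<omega>. (1 - s) * s^J * real (min (X \<omega>) J) \<partial>M)"
      by (simp add: e_def)
    also have "\<dots> \<le> (\<integral>\<omega>. 1 - s ^ X \<omega> \<partial>M)"
      by (rule integral_mono) (use s intm intp in \<open>auto intro!: pt_bound\<close>)
    also have "\<dots> = 1 - g s"
      using intp[OF s] pgf s by (simp add: has_pgf_def prob_space)
    finally show ?thesis .
  qed
  have eJ: "e J \<le> B" for J
  proof (rule field_le_epsilon)
    fix ep :: real assume ep: "0 < ep"
    define d where "d = ep / 2 / (real J ^ 2 + 1)"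
    have d: "0 < d" unfolding d_def using ep by (intro divide_pos_pos) (auto intro: add_nonneg_pos)
    obtain s0 where s0: "s0 < 1" "\<forall>s. s0 < s \<and> s < 1 \<longrightarrow> 1 - g s \<le> (B + ep/2) * (1 - s)"
      using H[of "ep/2"] ep by auto
    define t where "t = max (max s0 0) (1 - d)"
    define s where "s = (t + 1) / 2"
    have t1: "t < 1" using s0 d by (simp add: t_def)
    have ss: "s0 < s" "s < 1" "0 \<le> s" "1 - s \<le> d"
    proof -
      have "s0 \<le> t" "0 \<le> t" "1 - d \<le> t" by (auto simp: t_def)
      then show "s0 < s" "s < 1" "0 \<le> s" "1 - s \<le> d" using t1 d s0 unfolding s_def by (auto simp: field_simps)
    qed
    have A: "(1 - s) * s^J * e J \<le> (B + ep/2) * (1 - s)"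
      using order_trans[OF step1[of s J]] s0(2) ss by auto
    have pos: "0 < 1 - s" using ss by simp
    have B1: "s^J * e J \<le> B + ep/2"
      using A pos by (simp add: mult.assoc mult.commute[of "1-s"] mult_le_cancel_right_pos)
    have e0: "0 \<le> e J" unfolding e_def by (rule integral_nonneg_AE) auto
    have eleJ: "e J \<le> real J"
    proof -
      have "e J \<le> (\<integral>\<omega>. real J \<partial>M)" unfolding e_def
        by (rule integral_mono) (auto intro: intm)
      then show ?thesis by (simp add: prob_space)
    qed
    have bern: "1 - real J * (1 - s) \<le> s^J"
      using Bernoulli_inequality[of "s - 1" J] ss by (simp add: algebra_simps)
    have "(1 - real J * (1 - s)) * e J \<le> s^J * e J"
      by (rule mult_right_mono[OF bern e0])
    then have "e J \<le> B + ep/2 + real J * (1 - s) * e J"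
      using B1 by (simp add: algebra_simps)
    also have "real J * (1 - s) * e J \<le> real J * d * real J"
      using ss eleJ e0 pos by (intro mult_mono) auto
    also have "real J * d * real J \<le> ep / 2"
    proof -
      have "real J * d * real J = (real J^2) * (ep/2) / (real J^2 + 1)"
        by (simp add: d_def power2_eq_square)
      also have "\<dots> \<le> ep / 2"
        using ep by (simp add: field_simps add_pos_nonneg)
      finally show ?thesis .
    qed
    finally show "e J \<le> B + ep" by simp
  qed
  have "(\<integral>\<^sup>+\<omega>. of_nat (X \<omega>) \<partial>M) = (\<integral>\<^sup>+\<omega>. (SUP J. ennreal (real (min (X \<omega>) J))) \<partial>M)"
  proof (rule nn_integral_cong)
    fix \<omega>
    have "(SUP J. ennreal (real (min (X \<omega>) J))) = ennreal (real (X \<omega>))"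
    proof (rule antisym)
      show "(SUP J. ennreal (real (min (X \<omega>) J))) \<le> ennreal (real (X \<omega>))"
        by (rule SUP_least) (simp add: ennreal_leI)
      show "ennreal (real (X \<omega>)) \<le> (SUP J. ennreal (real (min (X \<omega>) J)))"
        by (rule SUP_upper2[of "X \<omega>"]) auto
    qed
    then show "of_nat (X \<omega>) = (SUP J. ennreal (real (min (X \<omega>) J)))"
      by (simp add: ennreal_of_nat_eq_real_of_nat)
  qed
  also have "\<dots> = (SUP J. \<integral>\<^sup>+\<omega>. ennreal (real (min (X \<omega>) J)) \<partial>M)"
    by (rule nn_integral_monotone_convergence_SUP)
       (auto simp: incseq_def le_fun_def ennreal_leI intro: mc measurable_compose[OF mc])
  also have "\<dots> \<le> ennreal B"
  proof (rule SUP_least)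
    fix J
    have "(\<integral>\<^sup>+\<omega>. ennreal (real (min (X \<omega>) J)) \<partial>M) = ennreal (e J)"
      unfolding e_def by (rule nn_integral_eq_integral[OF intm]) auto
    then show "(\<integral>\<^sup>+\<omega>. ennreal (real (min (X \<omega>) J)) \<partial>M) \<le> ennreal B"
      using eJ[of J] by (simp add: ennreal_leI)
  qed
  finally show ?thesis .
qed

definition ZP :: "nat \<Rightarrow> (src \<Rightarrow> nat \<Rightarrow> nat) \<Rightarrow> nat" where
  "ZP n x = Zproc (\<lambda>j i x. x (Off j i) 0) (\<lambda>j i x. x (Imm j) i) (\<lambda>x. x Init 0) n x"

definition Past :: "nat \<Rightarrow> src set" where
  "Past n = {Init} \<union> {Off j i |j i. j < n \<and> 1 \<le> i} \<union> {Imm j |j. j < n}"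

lemma ZP_0: "ZP 0 x = x Init 0" by (simp add: ZP_def)
lemma ZP_Suc: "ZP (Suc n) x = (\<Sum>i\<in>{1..ZP n x + x (Imm n) (ZP n x)}. x (Off n i) 0)"
  by (simp add: ZP_def)

lemma Past_mono: "m \<le> n \<Longrightarrow> Past m \<subseteq> Past n"
  by (auto simp: Past_def)

lemma Past_src: "Past n \<subseteq> src_index"
  by (auto simp: Past_def src_index_def)

lemma comp_meas:
  assumes "j \<in> K"
  shows "(\<lambda>x. x j i) \<in> measurable (PiM K (\<lambda>_. natfun_space)) (count_space UNIV)"
proof -
  have "(\<lambda>f. f i) \<circ> (\<lambda>x. x j) \<in> measurable (PiM K (\<lambda>_. natfun_space)) (count_space UNIV)"
    by (rule measurable_comp[OF measurable_component_singleton[OF assms]])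
       (rule measurable_component_singleton, simp)
  then show ?thesis by (simp add: comp_def)
qed

lemma ZP_meas:
  assumes "Past n \<subseteq> K"
  shows "ZP n \<in> measurable (PiM K (\<lambda>_. natfun_space)) (count_space UNIV)"
  using assms
proof (induction n)
  case 0
  then have "Init \<in> K" by (auto simp: Past_def)
  then show ?case by (simp add: ZP_0[abs_def] comp_meas)
next
  case (Suc n)
  have PK: "Past n \<subseteq> K" using Suc.prems Past_mono[of n "Suc n"] by auto
  have IH: "ZP n \<in> measurable (PiM K (\<lambda>_. natfun_space)) (count_space UNIV)"
    using Suc.IH[OF PK] .
  have Imm: "Imm n \<in> K" using Suc.prems by (auto simp: Past_def)
  have Off: "\<And>i. 1 \<le> i \<Longrightarrow> Off n i \<in> K" using Suc.prems by (auto simp: Past_def)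
  have g: "(\<lambda>x. ZP n x + x (Imm n) (ZP n x)) \<in> measurable (PiM K (\<lambda>_. natfun_space)) (count_space UNIV)"
  proof (rule meas_nat_add[OF IH])
    show "(\<lambda>x. x (Imm n) (ZP n x)) \<in> measurable (PiM K (\<lambda>_. natfun_space)) (count_space UNIV)"
      by (rule measurable_compose_countable[OF comp_meas[OF Imm] IH])
  qed
  have "(\<lambda>x. (\<lambda>N x. \<Sum>i\<in>{1..N}. x (Off n i) 0) (ZP n x + x (Imm n) (ZP n x)) x)
     \<in> measurable (PiM K (\<lambda>_. natfun_space)) (count_space UNIV)"
  proof (rule measurable_compose_countable[OF _ g])
    fix N :: nat
    show "(\<lambda>x. \<Sum>i\<in>{1..N}. x (Off n i) 0) \<in> measurable (PiM K (\<lambda>_. natfun_space)) (count_space UNIV)"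
      by (rule meas_nat_sum, rule comp_meas, rule Off) simp
  qed
  then show ?case by (simp add: ZP_Suc[abs_def])
qed

definition Vv :: "(nat \<Rightarrow> nat \<Rightarrow> 'a \<Rightarrow> nat) \<Rightarrow> (nat \<Rightarrow> nat \<Rightarrow> 'a \<Rightarrow> nat) \<Rightarrow> ('a \<Rightarrow> nat)
    \<Rightarrow> src set \<Rightarrow> 'a \<Rightarrow> src \<Rightarrow> nat \<Rightarrow> nat" where
  "Vv \<xi> \<psi> Z0 K \<omega> = restrict (\<lambda>j. src_var \<xi> \<psi> Z0 j \<omega>) K"

lemma Z_eq:
  assumes "Past n \<subseteq> K"
  shows "Zproc \<xi> \<psi> Z0 n \<omega> = ZP n (Vv \<xi> \<psi> Z0 K \<omega>)"
  using assms
proof (induction n)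
  case 0
  then have "Init \<in> K" by (auto simp: Past_def)
  then show ?case by (simp add: ZP_0 Vv_def src_var_def)
next
  case (Suc n)
  have PK: "Past n \<subseteq> K" using Suc.prems Past_mono[of n "Suc n"] by auto
  have Imm: "Imm n \<in> K" using Suc.prems by (auto simp: Past_def)
  have Off: "\<And>i. 1 \<le> i \<Longrightarrow> Off n i \<in> K" using Suc.prems by (auto simp: Past_def)
  have v1: "Vv \<xi> \<psi> Z0 K \<omega> (Imm n) = (\<lambda>i. \<psi> n i \<omega>)"
    using Imm by (simp add: Vv_def src_var_def)
  have v2: "Vv \<xi> \<psi> Z0 K \<omega> (Off n i) 0 = \<xi> n i \<omega>" if "i \<in> {1..N}" for i N
    using Off[of i] that by (simp add: Vv_def src_var_def)
  show ?case
    unfolding ZP_Suc Zproc.simps Suc.IH[OF PK, symmetric] v1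
    by (rule sum.cong[OF refl]) (rule v2[symmetric])
qed

lemma tau_iff:
  fixes \<gamma> \<tau> x c :: real
  assumes "0 < \<gamma>" shows "(\<tau> \<le> x / \<gamma> - c) = (\<gamma> * (\<tau> + c) \<le> x)"
proof -
  have "(\<tau> \<le> x / \<gamma> - c) = (\<tau> + c \<le> x / \<gamma>)" by linarith
  also have "\<dots> = ((\<tau> + c) * \<gamma> \<le> x)" by (rule pos_le_divide_eq[OF assms])
  finally show ?thesis by (simp add: mult.commute)
qed

locale bp = prob_space M for M :: "'a measure" +
  fixes \<xi> \<psi> :: "nat \<Rightarrow> nat \<Rightarrow> 'a \<Rightarrow> nat" and Z0 :: "'a \<Rightarrow> nat"
  assumes ind: "indep_vars (\<lambda>_. natfun_space) (src_var \<xi> \<psi> Z0) src_index"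
begin

abbreviation "X \<equiv> src_var \<xi> \<psi> Z0"
abbreviation "V \<equiv> Vv \<xi> \<psi> Z0"
abbreviation "Z \<equiv> Zproc \<xi> \<psi> Z0"

lemma X_meas: "j \<in> src_index \<Longrightarrow> X j \<in> measurable M natfun_space"
  using ind by (auto simp: indep_vars_def)

lemma V_meas: "K \<subseteq> src_index \<Longrightarrow> V K \<in> measurable M (PiM K (\<lambda>_. natfun_space))"
  unfolding Vv_def by (rule measurable_restrict) (auto intro: X_meas)

lemma Z_meas: "Z n \<in> measurable M (count_space UNIV)"
proof -
  have "ZP n \<circ> V (Past n) \<in> measurable M (count_space UNIV)"
    by (rule measurable_comp[OF V_meas[OF Past_src] ZP_meas]) simp
  moreover have "ZP n \<circ> V (Past n) = Z n"
    by (simp add: fun_eq_iff Z_eq[OF order_refl])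
  ultimately show ?thesis by simp
qed

lemma indep_mult:
  assumes K: "K \<subseteq> src_index" and j: "j \<in> src_index" "j \<notin> K"
    and F: "F \<in> borel_measurable (PiM K (\<lambda>_. natfun_space))"
    and G: "G \<in> borel_measurable natfun_space"
  shows "(\<integral>\<^sup>+\<omega>. F (V K \<omega>) * G (X j \<omega>) \<partial>M) = (\<integral>\<^sup>+\<omega>. F (V K \<omega>) \<partial>M) * (\<integral>\<^sup>+\<omega>. G (X j \<omega>) \<partial>M)"
proof -
  define KK where "KK b = (if b then K else {j})" for b :: bool
  have i1: "indep_vars (\<lambda>b. PiM (KK b) (\<lambda>_. natfun_space)) (\<lambda>b \<omega>. restrict (\<lambda>i. X i \<omega>) (KK b)) UNIV"
    by (rule indep_vars_restrict[OF ind]) (use K j in \<open>auto simp: KK_def disjoint_family_on_def\<close>)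
  define Y where "Y b = (if b then F else (\<lambda>x. G (x j)))" for b
  have Ym: "Y b \<in> borel_measurable (PiM (KK b) (\<lambda>_. natfun_space))" for b
  proof (cases b)
    case True then show ?thesis using F by (simp add: Y_def KK_def)
  next
    case False
    have "G \<circ> (\<lambda>x. x j) \<in> borel_measurable (PiM {j} (\<lambda>_. natfun_space))"
      by (rule measurable_comp[OF measurable_component_singleton[of j "{j}"] G]) simp
    then show ?thesis using False by (simp add: Y_def KK_def comp_def)
  qed
  have i2: "indep_vars (\<lambda>_. borel) (\<lambda>b \<omega>. Y b (restrict (\<lambda>i. X i \<omega>) (KK b))) UNIV"
    by (rule indep_vars_compose2[OF i1 Ym])
  have "(\<integral>\<^sup>+\<omega>. (\<Prod>b\<in>UNIV. Y b (restrict (\<lambda>i. X i \<omega>) (KK b))) \<partial>M)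
      = (\<Prod>b\<in>UNIV. \<integral>\<^sup>+\<omega>. Y b (restrict (\<lambda>i. X i \<omega>) (KK b)) \<partial>M)"
    by (rule indep_vars_nn_integral[OF _ i2]) auto
  moreover have e1: "\<And>\<omega>. Y True (restrict (\<lambda>i. X i \<omega>) (KK True)) = F (V K \<omega>)"
    by (simp add: Y_def KK_def Vv_def)
  moreover have e2: "\<And>\<omega>. Y False (restrict (\<lambda>i. X i \<omega>) (KK False)) = G (X j \<omega>)"
    by (simp add: Y_def KK_def)
  ultimately show ?thesis
    by (simp only: UNIV_bool prod.insert prod.empty finite.emptyI finite_insert insert_iff empty_iff e1 e2 simp_thms mult_1_right)
       (simp add: mult.commute)
qed


lemma nat_fun_meas: "g \<in> measurable N (count_space UNIV) \<Longrightarrow> (\<lambda>x. f (g x :: nat)) \<in> borel_measurable N"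
  using measurable_compose[of g N "count_space UNIV" f K] by auto

lemma VP_meas_fun:
  assumes "K \<subseteq> src_index" "F \<in> borel_measurable (PiM K (\<lambda>_. natfun_space))"
  shows "(\<lambda>\<omega>. F (V K \<omega>)) \<in> borel_measurable M"
  using measurable_compose[OF V_meas[OF assms(1)] assms(2)] .

lemma step_psi:
  fixes c \<kappa> :: ennreal
  assumes B: "B \<in> sets (PiM (Past n) (\<lambda>_. natfun_space))"
    and Bp: "\<And>z. (\<integral>\<^sup>+\<omega>. of_nat (\<psi> n z \<omega>) \<partial>M) \<le> c * (\<kappa> + of_nat z)"
  shows "(\<integral>\<^sup>+\<omega>. indicator B (V (Past n) \<omega>) * of_nat (\<psi> n (Z n \<omega>) \<omega>) \<partial>M)
      \<le> (\<integral>\<^sup>+\<omega>. indicator B (V (Past n) \<omega>) * (c * (\<kappa> + of_nat (Z n \<omega>))) \<partial>M)"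
proof -
  let ?P = "Past n"
  let ?PM = "PiM ?P (\<lambda>_. natfun_space)"
  define H where "H z x = (indicator B x * of_bool (ZP n x = z) :: ennreal)" for z x
  define G where "G z f = (of_nat (f z) :: ennreal)" for z and f :: "nat \<Rightarrow> nat"
  have Hm: "H z \<in> borel_measurable ?PM" for z
  proof -
    have "(\<lambda>x. of_bool (ZP n x = z) :: ennreal) \<in> borel_measurable ?PM"
      by (rule nat_fun_meas[OF ZP_meas]) simp
    then show ?thesis unfolding H_def using B by measurable
  qed
  have Gm: "G z \<in> borel_measurable natfun_space" for z
    unfolding G_def
    by (rule nat_fun_meas) (rule measurable_component_singleton, simp)
  have Imm: "Imm n \<in> src_index" "Imm n \<notin> ?P" by (auto simp: src_index_def Past_def)
  have XI: "X (Imm n) \<omega> = (\<lambda>i. \<psi> n i \<omega>)" for \<omega> by (simp add: src_var_def)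
  have ZV: "Z n \<omega> = ZP n (V ?P \<omega>)" for \<omega> by (rule Z_eq) simp
  have tm: "(\<lambda>\<omega>. H z (V ?P \<omega>) * G z (X (Imm n) \<omega>)) \<in> borel_measurable M" for z
    using VP_meas_fun[OF Past_src Hm] measurable_compose[OF X_meas[OF Imm(1)] Gm] by measurable
  have "(\<integral>\<^sup>+\<omega>. indicator B (V ?P \<omega>) * of_nat (\<psi> n (Z n \<omega>) \<omega>) \<partial>M)
      = (\<integral>\<^sup>+\<omega>. (\<Sum>z. H z (V ?P \<omega>) * G z (X (Imm n) \<omega>)) \<partial>M)"
  proof (rule nn_integral_cong)
    fix \<omega>
    have "(\<Sum>z. H z (V ?P \<omega>) * G z (X (Imm n) \<omega>)) = (\<Sum>z\<in>{Z n \<omega>}. H z (V ?P \<omega>) * G z (X (Imm n) \<omega>))"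
      by (rule suminf_finite) (auto simp: H_def ZV)
    also have "\<dots> = H (Z n \<omega>) (V ?P \<omega>) * G (Z n \<omega>) (X (Imm n) \<omega>)"
      by (simp only: sum.empty sum.insert finite.emptyI empty_iff add_0_right not_False_eq_True)
    finally show "indicator B (V ?P \<omega>) * of_nat (\<psi> n (Z n \<omega>) \<omega>) = (\<Sum>z. H z (V ?P \<omega>) * G z (X (Imm n) \<omega>))"
      by (simp add: H_def G_def XI ZV)
  qed
  also have "\<dots> = (\<Sum>z. \<integral>\<^sup>+\<omega>. H z (V ?P \<omega>) * G z (X (Imm n) \<omega>) \<partial>M)"
    by (rule nn_integral_suminf) (rule tm)
  also have "\<dots> = (\<Sum>z. (\<integral>\<^sup>+\<omega>. H z (V ?P \<omega>) \<partial>M) * (\<integral>\<^sup>+\<omega>. G z (X (Imm n) \<omega>) \<partial>M))"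
    by (intro suminf_cong indep_mult Past_src Imm Hm Gm)
  also have "\<dots> \<le> (\<Sum>z. (\<integral>\<^sup>+\<omega>. H z (V ?P \<omega>) \<partial>M) * (c * (\<kappa> + of_nat z)))"
    by (intro suminf_le mult_left_mono) (auto simp: G_def XI Bp)
  also have "\<dots> = (\<Sum>z. \<integral>\<^sup>+\<omega>. H z (V ?P \<omega>) * (c * (\<kappa> + of_nat z)) \<partial>M)"
    by (intro suminf_cong nn_integral_multc[symmetric] VP_meas_fun[OF Past_src Hm])
  also have "\<dots> = (\<integral>\<^sup>+\<omega>. (\<Sum>z. H z (V ?P \<omega>) * (c * (\<kappa> + of_nat z))) \<partial>M)"
    by (rule nn_integral_suminf[symmetric]) (use VP_meas_fun[OF Past_src Hm] in measurable)
  also have "\<dots> = (\<integral>\<^sup>+\<omega>. indicator B (V (Past n) \<omega>) * (c * (\<kappa> + of_nat (Z n \<omega>))) \<partial>M)"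
  proof (rule nn_integral_cong)
    fix \<omega>
    have "(\<Sum>z. H z (V ?P \<omega>) * (c * (\<kappa> + of_nat z))) = (\<Sum>z\<in>{Z n \<omega>}. H z (V ?P \<omega>) * (c * (\<kappa> + of_nat z)))"
      by (rule suminf_finite) (auto simp: H_def ZV)
    also have "\<dots> = H (Z n \<omega>) (V ?P \<omega>) * (c * (\<kappa> + of_nat (Z n \<omega>)))"
      by (simp only: sum.empty sum.insert finite.emptyI empty_iff add_0_right not_False_eq_True)
    finally show "(\<Sum>z. H z (V ?P \<omega>) * (c * (\<kappa> + of_nat z))) = indicator B (V (Past n) \<omega>) * (c * (\<kappa> + of_nat (Z n \<omega>)))"
      by (simp add: H_def ZV)
  qed
  finally show ?thesis .
qed


lemma step_xi:
  fixes Bx :: ennreal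
  assumes B: "B \<in> sets (PiM (Past n) (\<lambda>_. natfun_space))"
    and Bxi: "\<And>i. 1 \<le> i \<Longrightarrow> (\<integral>\<^sup>+\<omega>. of_nat (\<xi> n i \<omega>) \<partial>M) \<le> Bx"
  shows "(\<integral>\<^sup>+\<omega>. indicator B (V (Past n) \<omega>) * of_nat (Z (Suc n) \<omega>) \<partial>M)
      \<le> Bx * (\<integral>\<^sup>+\<omega>. indicator B (V (Past n) \<omega>) * of_nat (Z n \<omega> + \<psi> n (Z n \<omega>) \<omega>) \<partial>M)"
proof -
  let ?P = "Past n"
  let ?Q = "insert (Imm n) (Past n)"
  let ?QM = "PiM ?Q (\<lambda>_. natfun_space)"
  define W where "W x = ZP n x + x (Imm n) (ZP n x)" for x :: "src \<Rightarrow> nat \<Rightarrow> nat"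
  define F where "F i x = (indicator B (restrict x ?P) * of_bool (1 \<le> i \<and> i \<le> W x) :: ennreal)" for i x
  define G where "G f = (of_nat (f (0::nat)) :: ennreal)" for f :: "nat \<Rightarrow> nat"
  have QS: "?Q \<subseteq> src_index" using Past_src by (auto simp: src_index_def)
  have PQ: "Past n \<subseteq> ?Q" by auto
  have Wm: "W \<in> measurable ?QM (count_space UNIV)"
  proof -
    have "Imm n \<in> ?Q" by simp
    then show ?thesis unfolding W_def
      by (intro meas_nat_add ZP_meas[OF PQ] measurable_compose_countable[OF comp_meas ZP_meas[OF PQ]])
  qed
  have Fm: "F i \<in> borel_measurable ?QM" for i
  proof -
    have "(\<lambda>x. of_bool (1 \<le> i \<and> i \<le> W x) :: ennreal) \<in> borel_measurable ?QM"
      by (rule nat_fun_meas[OF Wm])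
    moreover have "(\<lambda>x. indicator B (restrict x ?P) :: ennreal) \<in> borel_measurable ?QM"
      using measurable_compose[OF measurable_restrict_subset[OF PQ] borel_measurable_indicator[OF B]] .
    ultimately show ?thesis unfolding F_def by measurable
  qed
  have Gm: "G \<in> borel_measurable natfun_space"
    unfolding G_def by (rule nat_fun_meas) (rule measurable_component_singleton, simp)
  have Off: "Off n i \<in> src_index" "Off n i \<notin> ?Q" if "1 \<le> i" for i
    using that by (auto simp: src_index_def Past_def)
  have XO: "G (X (Off n i) \<omega>) = of_nat (\<xi> n i \<omega>)" for i \<omega> by (simp add: src_var_def G_def)
  have VPQ: "V ?P \<omega> = restrict (V ?Q \<omega>) ?P" for \<omega> by (auto simp: Vv_def fun_eq_iff)
  have ZV: "Z n \<omega> = ZP n (V ?Q \<omega>)" for \<omega> by (rule Z_eq[OF PQ])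
  have WV: "W (V ?Q \<omega>) = Z n \<omega> + \<psi> n (Z n \<omega>) \<omega>" for \<omega>
    by (simp add: W_def ZV) (simp add: Vv_def src_var_def)
  have F0: "F 0 x = 0" for x by (simp add: F_def)
  have tm: "(\<lambda>\<omega>. F i (V ?Q \<omega>) * G (X (Off n i) \<omega>)) \<in> borel_measurable M" for i
  proof (cases "i = 0")
    case True then show ?thesis by (simp add: F0)
  next
    case False
    then have "1 \<le> i" by simp
    then show ?thesis
      using VP_meas_fun[OF QS Fm] measurable_compose[OF X_meas[OF Off(1)] Gm] by measurable
  qed
  have "(\<integral>\<^sup>+\<omega>. indicator B (V ?P \<omega>) * of_nat (Z (Suc n) \<omega>) \<partial>M)
      = (\<integral>\<^sup>+\<omega>. (\<Sum>i. F i (V ?Q \<omega>) * G (X (Off n i) \<omega>)) \<partial>M)"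
  proof (rule nn_integral_cong)
    fix \<omega>
    have "(\<Sum>i. F i (V ?Q \<omega>) * G (X (Off n i) \<omega>)) = (\<Sum>i\<in>{1..W (V ?Q \<omega>)}. F i (V ?Q \<omega>) * G (X (Off n i) \<omega>))"
      by (rule suminf_finite) (auto simp: F_def)
    also have "\<dots> = (\<Sum>i\<in>{1..W (V ?Q \<omega>)}. indicator B (V ?P \<omega>) * of_nat (\<xi> n i \<omega>))"
      by (rule sum.cong) (auto simp: F_def XO VPQ)
    also have "\<dots> = indicator B (V ?P \<omega>) * of_nat (Z (Suc n) \<omega>)"
      by (simp add: sum_distrib_left WV)
    finally show "indicator B (V ?P \<omega>) * of_nat (Z (Suc n) \<omega>) = (\<Sum>i. F i (V ?Q \<omega>) * G (X (Off n i) \<omega>))"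
      by simp
  qed
  also have "\<dots> = (\<Sum>i. \<integral>\<^sup>+\<omega>. F i (V ?Q \<omega>) * G (X (Off n i) \<omega>) \<partial>M)"
    by (rule nn_integral_suminf) (rule tm)
  also have "\<dots> \<le> (\<Sum>i. (\<integral>\<^sup>+\<omega>. F i (V ?Q \<omega>) \<partial>M) * Bx)"
  proof (intro suminf_le)
    fix i
    show "(\<integral>\<^sup>+\<omega>. F i (V ?Q \<omega>) * G (X (Off n i) \<omega>) \<partial>M) \<le> (\<integral>\<^sup>+\<omega>. F i (V ?Q \<omega>) \<partial>M) * Bx"
    proof (cases "i = 0")
      case True then show ?thesis by (simp add: F0)
    next
      case False
      then have i: "1 \<le> i" by simp
      have "(\<integral>\<^sup>+\<omega>. F i (V ?Q \<omega>) * G (X (Off n i) \<omega>) \<partial>M)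
          = (\<integral>\<^sup>+\<omega>. F i (V ?Q \<omega>) \<partial>M) * (\<integral>\<^sup>+\<omega>. G (X (Off n i) \<omega>) \<partial>M)"
        by (rule indep_mult[OF QS Off[OF i] Fm Gm])
      also have "\<dots> \<le> (\<integral>\<^sup>+\<omega>. F i (V ?Q \<omega>) \<partial>M) * Bx"
        by (rule mult_left_mono) (auto simp: XO Bxi[OF i])
      finally show ?thesis .
    qed
  qed auto
  also have "\<dots> = Bx * (\<Sum>i. \<integral>\<^sup>+\<omega>. F i (V ?Q \<omega>) \<partial>M)"
    by (simp add: mult.commute)
  also have "(\<Sum>i. \<integral>\<^sup>+\<omega>. F i (V ?Q \<omega>) \<partial>M) = (\<integral>\<^sup>+\<omega>. (\<Sum>i. F i (V ?Q \<omega>)) \<partial>M)"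
    by (rule nn_integral_suminf[symmetric]) (rule VP_meas_fun[OF QS Fm])
  also have "\<dots> = (\<integral>\<^sup>+\<omega>. indicator B (V (Past n) \<omega>) * of_nat (Z n \<omega> + \<psi> n (Z n \<omega>) \<omega>) \<partial>M)"
  proof (rule nn_integral_cong)
    fix \<omega>
    have "(\<Sum>i. F i (V ?Q \<omega>)) = (\<Sum>i\<in>{1..W (V ?Q \<omega>)}. F i (V ?Q \<omega>))"
      by (rule suminf_finite) (auto simp: F_def)
    also have "\<dots> = (\<Sum>i\<in>{1..W (V ?Q \<omega>)}. indicator B (V ?P \<omega>))"
      by (rule sum.cong) (auto simp: F_def VPQ)
    also have "\<dots> = indicator B (V (Past n) \<omega>) * of_nat (Z n \<omega> + \<psi> n (Z n \<omega>) \<omega>)"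
      by (simp add: WV mult.commute)
    finally show "(\<Sum>i. F i (V ?Q \<omega>)) = indicator B (V (Past n) \<omega>) * of_nat (Z n \<omega> + \<psi> n (Z n \<omega>) \<omega>)" .
  qed
  finally show ?thesis by simp
qed


lemma Zn_borel: "(\<lambda>\<omega>. of_nat (Z n \<omega>) :: ennreal) \<in> borel_measurable M"
  by (rule nat_fun_meas[OF Z_meas])

lemma ind_borel: "B \<in> sets (PiM (Past n) (\<lambda>_. natfun_space)) \<Longrightarrow>
    (\<lambda>\<omega>. indicator B (V (Past n) \<omega>) :: ennreal) \<in> borel_measurable M"
  by (rule VP_meas_fun[OF Past_src]) (rule borel_measurable_indicator)

lemma key:
  fixes Bx c \<kappa> :: ennreal
  assumes B: "B \<in> sets (PiM (Past n) (\<lambda>_. natfun_space))"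
    and Bxi: "\<And>i. 1 \<le> i \<Longrightarrow> (\<integral>\<^sup>+\<omega>. of_nat (\<xi> n i \<omega>) \<partial>M) \<le> Bx"
    and Bp: "\<And>z. (\<integral>\<^sup>+\<omega>. of_nat (\<psi> n z \<omega>) \<partial>M) \<le> c * (\<kappa> + of_nat z)"
    and Bx1: "1 \<le> Bx"
  shows "(\<integral>\<^sup>+\<omega>. indicator B (V (Past n) \<omega>) * (of_nat (Z (Suc n) \<omega>) + \<kappa>) \<partial>M)
      \<le> Bx * (1 + c) * (\<integral>\<^sup>+\<omega>. indicator B (V (Past n) \<omega>) * (of_nat (Z n \<omega>) + \<kappa>) \<partial>M)"
proof -
  let ?I = "\<lambda>\<omega>. indicator B (V (Past n) \<omega>) :: ennreal"
  have Im: "?I \<in> borel_measurable M" by (rule ind_borel[OF B])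
  have psim: "(\<lambda>\<omega>. of_nat (\<psi> n (Z n \<omega>) \<omega>) :: ennreal) \<in> borel_measurable M"
  proof -
    have "(\<lambda>\<omega>. (\<lambda>z \<omega>. of_nat (\<psi> n z \<omega>) :: ennreal) (Z n \<omega>) \<omega>) \<in> borel_measurable M"
    proof (rule measurable_compose_countable[OF _ Z_meas])
      fix z
      have "Imm n \<in> src_index" by (simp add: src_index_def)
      from measurable_compose[OF X_meas[OF this] measurable_component_singleton[of z UNIV "\<lambda>_. count_space UNIV"]]
      have "(\<lambda>\<omega>. \<psi> n z \<omega>) \<in> measurable M (count_space UNIV)" by (simp add: src_var_def)
      then show "(\<lambda>\<omega>. of_nat (\<psi> n z \<omega>) :: ennreal) \<in> borel_measurable M" by (rule nat_fun_meas)
    qed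
    then show ?thesis by simp
  qed
  define p where "p = (\<integral>\<^sup>+\<omega>. ?I \<omega> * of_nat (Z n \<omega>) \<partial>M)"
  define q where "q = (\<integral>\<^sup>+\<omega>. ?I \<omega> * \<kappa> \<partial>M)"
  define r where "r = (\<integral>\<^sup>+\<omega>. ?I \<omega> * of_nat (\<psi> n (Z n \<omega>) \<omega>) \<partial>M)"
  have "(\<integral>\<^sup>+\<omega>. ?I \<omega> * (of_nat (Z (Suc n) \<omega>) + \<kappa>) \<partial>M)
      = (\<integral>\<^sup>+\<omega>. ?I \<omega> * of_nat (Z (Suc n) \<omega>) \<partial>M) + q"
    unfolding q_def distrib_left
    by (rule nn_integral_add) (use Im Zn_borel in measurable)
  also have "(\<integral>\<^sup>+\<omega>. ?I \<omega> * of_nat (Z (Suc n) \<omega>) \<partial>M) \<le> Bx * (p + r)"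
  proof -
    have "(\<integral>\<^sup>+\<omega>. ?I \<omega> * of_nat (Z n \<omega> + \<psi> n (Z n \<omega>) \<omega>) \<partial>M) = p + r"
      unfolding p_def r_def of_nat_add distrib_left
      by (rule nn_integral_add) (use Im Zn_borel psim in measurable)
    then show ?thesis using step_xi[OF B Bxi] by simp
  qed
  also have "r \<le> (\<integral>\<^sup>+\<omega>. ?I \<omega> * (c * (\<kappa> + of_nat (Z n \<omega>))) \<partial>M)"
    unfolding r_def by (rule step_psi[OF B Bp])
  also have "(\<integral>\<^sup>+\<omega>. ?I \<omega> * (c * (\<kappa> + of_nat (Z n \<omega>))) \<partial>M) = c * (q + p)"
  proof -
    have "(\<integral>\<^sup>+\<omega>. ?I \<omega> * (c * (\<kappa> + of_nat (Z n \<omega>))) \<partial>M) = (\<integral>\<^sup>+\<omega>. c * (?I \<omega> * \<kappa> + ?I \<omega> * of_nat (Z n \<omega>)) \<partial>M)"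
      by (simp add: algebra_simps)
    also have "\<dots> = c * (\<integral>\<^sup>+\<omega>. (?I \<omega> * \<kappa> + ?I \<omega> * of_nat (Z n \<omega>)) \<partial>M)"
      by (rule nn_integral_cmult) (use Im Zn_borel in measurable)
    also have "(\<integral>\<^sup>+\<omega>. (?I \<omega> * \<kappa> + ?I \<omega> * of_nat (Z n \<omega>)) \<partial>M) = q + p"
      unfolding p_def q_def by (rule nn_integral_add) (use Im Zn_borel in measurable)
    finally show ?thesis .
  qed
  also have "(\<integral>\<^sup>+\<omega>. ?I \<omega> * (of_nat (Z n \<omega>) + \<kappa>) \<partial>M) = p + q"
    unfolding p_def q_def distrib_left
    by (rule nn_integral_add) (use Im Zn_borel in measurable)
  moreover have "Bx * (p + c * (q + p)) + q \<le> Bx * (1 + c) * (p + q)"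
  proof -
    have "q \<le> Bx * q" using mult_right_mono[OF Bx1, of q] by simp
    then have "Bx * (p + c * (q + p)) + q \<le> Bx * (p + c * (q + p)) + Bx * q"
      by (rule add_left_mono)
    also have "\<dots> = Bx * (1 + c) * (p + q)"
      by (simp add: algebra_simps)
    finally show ?thesis .
  qed
  ultimately show ?thesis
    by (smt (verit) add_right_mono mult_left_mono order_trans add_left_mono zero_le)
qed


lemma optional:
  fixes \<kappa> :: ennreal and a :: real and S :: "'a \<Rightarrow> nat"
  assumes KEY: "\<And>n B. B \<in> sets (PiM (Past n) (\<lambda>_. natfun_space)) \<Longrightarrow>
      (\<integral>\<^sup>+\<omega>. indicator B (V (Past n) \<omega>) * (of_nat (Z (Suc n) \<omega>) + \<kappa>) \<partial>M)
      \<le> ennreal a * (\<integral>\<^sup>+\<omega>. indicator B (V (Past n) \<omega>) * (of_nat (Z n \<omega>) + \<kappa>) \<partial>M)"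
    and Sst: "\<And>n. \<exists>B\<in>sets (PiM (Past n) (\<lambda>_. natfun_space)). \<forall>\<omega>\<in>space M. (S \<omega> \<le> n \<longleftrightarrow> V (Past n) \<omega> \<in> B)"
    and Sb: "\<And>\<omega>. \<omega> \<in> space M \<Longrightarrow> S \<omega> \<le> N"
    and a1: "1 \<le> a"
  shows "(\<integral>\<^sup>+\<omega>. of_nat (Z (S \<omega>) \<omega>) + \<kappa> \<partial>M) \<le> ennreal (a ^ N) * (\<integral>\<^sup>+\<omega>. of_nat (Z0 \<omega>) + \<kappa> \<partial>M)"
proof -
  have Sle: "{\<omega>\<in>space M. S \<omega> \<le> n} \<in> sets M" for n
  proof -
    obtain B where B: "B \<in> sets (PiM (Past n) (\<lambda>_. natfun_space))"
      "\<forall>\<omega>\<in>space M. (S \<omega> \<le> n \<longleftrightarrow> V (Past n) \<omega> \<in> B)" using Sst[of n] by blast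
    have "{\<omega>\<in>space M. S \<omega> \<le> n} = V (Past n) -` B \<inter> space M" using B(2) by auto
    also have "\<dots> \<in> sets M" by (rule measurable_sets[OF V_meas[OF Past_src] B(1)])
    finally show ?thesis .
  qed
  have Sm: "S \<in> measurable M (count_space UNIV)"
    unfolding measurable_count_space_eq2_countable
  proof safe
    fix j
    show "S -` {j} \<inter> space M \<in> sets M"
    proof (cases j)
      case 0
      then have "S -` {j} \<inter> space M = {\<omega>\<in>space M. S \<omega> \<le> 0}" by auto
      then show ?thesis using Sle[of 0] by (simp only:)
    next
      case (Suc j')
      then have "S -` {j} \<inter> space M = {\<omega>\<in>space M. S \<omega> \<le> j} - {\<omega>\<in>space M. S \<omega> \<le> j'}" by auto
      then show ?thesis using Sle by auto
    qed
  qed auto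
  define U where "U m \<omega> = ennreal (1 / a ^ min (S \<omega>) m) * (of_nat (Z (min (S \<omega>) m) \<omega>) + \<kappa>)" for m \<omega>
  have Um: "U m \<in> borel_measurable M" for m
  proof -
    have "(\<lambda>\<omega>. (\<lambda>j \<omega>. ennreal (1 / a ^ min j m) * (of_nat (Z (min j m) \<omega>) + \<kappa>)) (S \<omega>) \<omega>) \<in> borel_measurable M"
      by (rule measurable_compose_countable[OF _ Sm]) (use Zn_borel in measurable)
    then show ?thesis by (simp add: U_def[abs_def])
  qed
  have apos: "0 < a" using a1 by simp
  have Ustep: "(\<integral>\<^sup>+\<omega>. U (Suc m) \<omega> \<partial>M) \<le> (\<integral>\<^sup>+\<omega>. U m \<omega> \<partial>M)" for m
  proof -
    obtain B where B: "B \<in> sets (PiM (Past m) (\<lambda>_. natfun_space))"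
      "\<forall>\<omega>\<in>space M. (S \<omega> \<le> m \<longleftrightarrow> V (Past m) \<omega> \<in> B)" using Sst[of m] by blast
    define B' where "B' = space (PiM (Past m) (\<lambda>_. natfun_space)) - B"
    have B': "B' \<in> sets (PiM (Past m) (\<lambda>_. natfun_space))" using B(1) by (auto simp: B'_def)
    have Vsp: "V (Past m) \<omega> \<in> space (PiM (Past m) (\<lambda>_. natfun_space))" if "\<omega> \<in> space M" for \<omega>
      using measurable_space[OF V_meas[OF Past_src] that] .
    let ?I = "\<lambda>\<omega>. indicator B (V (Past m) \<omega>) :: ennreal"
    let ?I' = "\<lambda>\<omega>. indicator B' (V (Past m) \<omega>) :: ennreal"
    have Im: "?I \<in> borel_measurable M" "?I' \<in> borel_measurable M"
      using ind_borel[OF B(1)] ind_borel[OF B'] by auto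
    have sp1: "U (Suc m) \<omega> = ?I \<omega> * U m \<omega> + ennreal (1 / a ^ Suc m) * (?I' \<omega> * (of_nat (Z (Suc m) \<omega>) + \<kappa>))"
      if "\<omega> \<in> space M" for \<omega>
    proof (cases "S \<omega> \<le> m")
      case True
      then have "V (Past m) \<omega> \<in> B" "V (Past m) \<omega> \<notin> B'" using B(2) that by (auto simp: B'_def)
      moreover have "min (S \<omega>) (Suc m) = min (S \<omega>) m" using True by simp
      ultimately show ?thesis by (simp add: U_def)
    next
      case False
      then have "V (Past m) \<omega> \<notin> B" "V (Past m) \<omega> \<in> B'" using B(2) that Vsp[OF that] by (auto simp: B'_def)
      moreover have "min (S \<omega>) (Suc m) = Suc m" using False by simp
      ultimately have "indicator B (V (Past m) \<omega>) = (0::ennreal)" "indicator B' (V (Past m) \<omega>) = (1::ennreal)"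
        by auto
      with \<open>min (S \<omega>) _ = _\<close> show ?thesis by (simp only: U_def mult_zero_left mult_1 add_0)
    qed
    have sp2: "U m \<omega> = ?I \<omega> * U m \<omega> + ennreal (1 / a ^ m) * (?I' \<omega> * (of_nat (Z m \<omega>) + \<kappa>))"
      if "\<omega> \<in> space M" for \<omega>
    proof (cases "S \<omega> \<le> m")
      case True
      then have "V (Past m) \<omega> \<in> B" "V (Past m) \<omega> \<notin> B'" using B(2) that by (auto simp: B'_def)
      then show ?thesis by simp
    next
      case False
      then have "V (Past m) \<omega> \<notin> B" "V (Past m) \<omega> \<in> B'" using B(2) that Vsp[OF that] by (auto simp: B'_def)
      moreover have "min (S \<omega>) m = m" using False by simp
      ultimately have "indicator B (V (Past m) \<omega>) = (0::ennreal)" "indicator B' (V (Past m) \<omega>) = (1::ennreal)"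
        by auto
      with \<open>min (S \<omega>) _ = _\<close> show ?thesis by (simp only: U_def mult_zero_left mult_1 add_0)
    qed
    have "(\<integral>\<^sup>+\<omega>. U (Suc m) \<omega> \<partial>M) = (\<integral>\<^sup>+\<omega>. ?I \<omega> * U m \<omega> + ennreal (1 / a ^ Suc m) * (?I' \<omega> * (of_nat (Z (Suc m) \<omega>) + \<kappa>)) \<partial>M)"
      by (rule nn_integral_cong) (rule sp1)
    also have "\<dots> = (\<integral>\<^sup>+\<omega>. ?I \<omega> * U m \<omega> \<partial>M) + ennreal (1 / a ^ Suc m) * (\<integral>\<^sup>+\<omega>. ?I' \<omega> * (of_nat (Z (Suc m) \<omega>) + \<kappa>) \<partial>M)"
    proof -
      have m1: "(\<lambda>\<omega>. ?I \<omega> * U m \<omega>) \<in> borel_measurable M" using Im Um by measurable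
      have m2: "(\<lambda>\<omega>. ?I' \<omega> * (of_nat (Z (Suc m) \<omega>) + \<kappa>)) \<in> borel_measurable M"
        using Im Zn_borel[of "Suc m"] by measurable
      have m3: "(\<lambda>\<omega>. ennreal (1 / a ^ Suc m) * (?I' \<omega> * (of_nat (Z (Suc m) \<omega>) + \<kappa>))) \<in> borel_measurable M"
        using m2 by measurable
      show ?thesis
        by (simp only: nn_integral_add[OF m1 m3] nn_integral_cmult[OF m2])
    qed
    also have "\<dots> \<le> (\<integral>\<^sup>+\<omega>. ?I \<omega> * U m \<omega> \<partial>M) + ennreal (1 / a ^ Suc m) * (ennreal a * (\<integral>\<^sup>+\<omega>. ?I' \<omega> * (of_nat (Z m \<omega>) + \<kappa>) \<partial>M))"
      by (intro add_left_mono mult_left_mono KEY[OF B']) auto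
    also have "ennreal (1 / a ^ Suc m) * (ennreal a * (\<integral>\<^sup>+\<omega>. ?I' \<omega> * (of_nat (Z m \<omega>) + \<kappa>) \<partial>M))
        = ennreal (1 / a ^ m) * (\<integral>\<^sup>+\<omega>. ?I' \<omega> * (of_nat (Z m \<omega>) + \<kappa>) \<partial>M)"
    proof -
      have "ennreal (1 / a ^ Suc m) * ennreal a = ennreal (1 / a ^ m)"
        using apos by (simp add: ennreal_mult[symmetric])
      then show ?thesis by (simp add: mult.assoc[symmetric])
    qed
    also have "(\<integral>\<^sup>+\<omega>. ?I \<omega> * U m \<omega> \<partial>M) + ennreal (1 / a ^ m) * (\<integral>\<^sup>+\<omega>. ?I' \<omega> * (of_nat (Z m \<omega>) + \<kappa>) \<partial>M)
        = (\<integral>\<^sup>+\<omega>. ?I \<omega> * U m \<omega> + ennreal (1 / a ^ m) * (?I' \<omega> * (of_nat (Z m \<omega>) + \<kappa>)) \<partial>M)"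
    proof -
      have m1: "(\<lambda>\<omega>. ?I \<omega> * U m \<omega>) \<in> borel_measurable M" using Im Um by measurable
      have m2: "(\<lambda>\<omega>. ?I' \<omega> * (of_nat (Z m \<omega>) + \<kappa>)) \<in> borel_measurable M"
        using Im Zn_borel[of m] by measurable
      have m3: "(\<lambda>\<omega>. ennreal (1 / a ^ m) * (?I' \<omega> * (of_nat (Z m \<omega>) + \<kappa>))) \<in> borel_measurable M"
        using m2 by measurable
      show ?thesis
        by (simp only: nn_integral_add[OF m1 m3] nn_integral_cmult[OF m2])
    qed
    also have "\<dots> = (\<integral>\<^sup>+\<omega>. U m \<omega> \<partial>M)"
      by (rule nn_integral_cong) (rule sp2[symmetric])
    finally show ?thesis .
  qed
  have Uall: "(\<integral>\<^sup>+\<omega>. U m \<omega> \<partial>M) \<le> (\<integral>\<^sup>+\<omega>. U 0 \<omega> \<partial>M)" for m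
    by (induction m) (auto intro: order_trans[OF Ustep])
  have U0: "U 0 \<omega> = of_nat (Z0 \<omega>) + \<kappa>" for \<omega> by (simp add: U_def)
  have "(\<integral>\<^sup>+\<omega>. of_nat (Z (S \<omega>) \<omega>) + \<kappa> \<partial>M) \<le> (\<integral>\<^sup>+\<omega>. ennreal (a ^ N) * U N \<omega> \<partial>M)"
  proof (rule nn_integral_mono)
    fix \<omega> assume w: "\<omega> \<in> space M"
    have mn: "min (S \<omega>) N = S \<omega>" using Sb[OF w] by simp
    have "1 \<le> a ^ N * (1 / a ^ S \<omega>)"
      using Sb[OF w] a1 apos by (simp add: field_simps power_increasing)
    then have "1 \<le> ennreal (a ^ N) * ennreal (1 / a ^ S \<omega>)"
      using apos by (simp add: ennreal_mult[symmetric])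
    then have "1 * (of_nat (Z (S \<omega>) \<omega>) + \<kappa>) \<le> (ennreal (a ^ N) * ennreal (1 / a ^ S \<omega>)) * (of_nat (Z (S \<omega>) \<omega>) + \<kappa>)"
      by (rule mult_right_mono) simp
    then show "of_nat (Z (S \<omega>) \<omega>) + \<kappa> \<le> ennreal (a ^ N) * U N \<omega>"
      by (simp add: U_def mn mult.assoc)
  qed
  also have "\<dots> = ennreal (a ^ N) * (\<integral>\<^sup>+\<omega>. U N \<omega> \<partial>M)"
    by (rule nn_integral_cmult[OF Um])
  also have "\<dots> \<le> ennreal (a ^ N) * (\<integral>\<^sup>+\<omega>. of_nat (Z0 \<omega>) + \<kappa> \<partial>M)"
    using Uall[of N] by (intro mult_left_mono) (auto simp: U0)
  finally show ?thesis .
qed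


lemma filt_sub:
  fixes k :: nat and \<gamma> t :: real
  assumes g: "0 < \<gamma>" and t: "\<gamma> * t < real n + 1"
  shows "sets (nat_filtration M (\<lambda>t. Yproc k \<gamma> Z t) t)
     \<subseteq> sets (vimage_algebra (space M) (V (Past n)) (PiM (Past n) (\<lambda>_. natfun_space)))"
proof -
  let ?VA = "vimage_algebra (space M) (V (Past n)) (PiM (Past n) (\<lambda>_. natfun_space))"
  let ?G = "{(\<lambda>t. Yproc k \<gamma> Z t) s -` A \<inter> space M | s A. 0 \<le> s \<and> s \<le> t \<and> A \<in> sets borel}"
  have Vsp: "V (Past n) \<in> space M \<rightarrow> space (PiM (Past n) (\<lambda>_. natfun_space))"
    using measurable_space[OF V_meas[OF Past_src]] by auto
  have GP: "?G \<subseteq> Pow (space M)" by auto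
  have GV: "?G \<subseteq> sets ?VA"
  proof
    fix E assume "E \<in> ?G"
    then obtain s A where E: "E = (\<lambda>t. Yproc k \<gamma> Z t) s -` A \<inter> space M" and s: "0 \<le> s" "s \<le> t"
      and A: "A \<in> sets borel" by blast
    define m where "m = nat \<lfloor>\<gamma> * s\<rfloor>"
    have "\<gamma> * s \<le> \<gamma> * t" using s g by (simp add: mult_left_mono)
    then have "m \<le> n" using t unfolding m_def by linarith
    then have Pm: "Past m \<subseteq> Past n" by (rule Past_mono)
    define f where "f x = real (ZP m x) / real k" for x
    have fm: "f \<in> borel_measurable (PiM (Past n) (\<lambda>_. natfun_space))"
      unfolding f_def using nat_fun_meas[OF ZP_meas[OF Pm], of "\<lambda>z. real z / real k"] by simp
    have "E = V (Past n) -` (f -` A \<inter> space (PiM (Past n) (\<lambda>_. natfun_space))) \<inter> space M"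
      using Vsp by (auto simp: E Yproc_def f_def m_def[symmetric] Z_eq[OF Pm])
    moreover have "f -` A \<inter> space (PiM (Past n) (\<lambda>_. natfun_space)) \<in> sets (PiM (Past n) (\<lambda>_. natfun_space))"
      using measurable_sets[OF fm A] .
    ultimately show "E \<in> sets ?VA"
      unfolding sets_vimage_algebra2[OF Vsp] by blast
  qed
  have "sigma_sets (space M) ?G \<subseteq> sets ?VA"
    using sets.sigma_sets_subset[OF GV] by simp
  then show ?thesis
    unfolding nat_filtration_def by (simp add: sets_measure_of[OF GP])
qed

lemma stop_disc:
  fixes k :: nat and \<gamma> c :: real and \<tau> :: "'a \<Rightarrow> real"
  assumes g: "0 < \<gamma>" and c: "0 \<le> c"
    and st: "stopping_time (nat_filtration M (\<lambda>t. Yproc k \<gamma> Z t)) \<tau>"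
  shows "\<exists>B\<in>sets (PiM (Past n) (\<lambda>_. natfun_space)). \<forall>\<omega>\<in>space M.
           (nat \<lfloor>\<gamma> * (\<tau> \<omega> + c)\<rfloor> \<le> n \<longleftrightarrow> V (Past n) \<omega> \<in> B)"
proof -
  let ?VA = "vimage_algebra (space M) (V (Past n)) (PiM (Past n) (\<lambda>_. natfun_space))"
  let ?F = "nat_filtration M (\<lambda>t. Yproc k \<gamma> Z t)"
  have Vsp: "V (Past n) \<in> space M \<rightarrow> space (PiM (Past n) (\<lambda>_. natfun_space))"
    using measurable_space[OF V_meas[OF Past_src]] by auto
  define t where "t j = (real n + 1 - 1 / real (Suc j)) / \<gamma> - c" for j
  have spF: "space (?F s) = space M" for s
    unfolding nat_filtration_def by (rule space_measure_of) auto
  have mem: "{\<omega>\<in>space M. \<tau> \<omega> \<le> t j} \<in> sets ?VA" for j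
  proof -
    have "{\<omega>\<in>space (?F (t j)). \<tau> \<omega> \<le> t j} \<in> sets (?F (t j))"
      using st unfolding stopping_time_def pred_def by blast
    moreover have "\<gamma> * t j < real n + 1"
    proof -
      have "\<gamma> * t j = real n + 1 - 1 / real (Suc j) - \<gamma> * c"
        using g unfolding t_def right_diff_distrib by (simp only: times_divide_eq_right nonzero_mult_div_cancel_left less_irrefl)
      moreover have "0 < 1 / real (Suc j)" "0 \<le> \<gamma> * c" using g c by auto
      ultimately show ?thesis by linarith
    qed
    ultimately show ?thesis using filt_sub[OF g] spF by auto
  qed
  have eq: "{\<omega>\<in>space M. nat \<lfloor>\<gamma> * (\<tau> \<omega> + c)\<rfloor> \<le> n} = (\<Union>j. {\<omega>\<in>space M. \<tau> \<omega> \<le> t j})"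
  proof (intro set_eqI iffI)
    fix \<omega> assume "\<omega> \<in> {\<omega>\<in>space M. nat \<lfloor>\<gamma> * (\<tau> \<omega> + c)\<rfloor> \<le> n}"
    then have w: "\<omega> \<in> space M" and "nat \<lfloor>\<gamma> * (\<tau> \<omega> + c)\<rfloor> \<le> n" by auto
    then have lt: "\<gamma> * (\<tau> \<omega> + c) < real n + 1" by linarith
    obtain j where j: "0 < j" "inverse (real j) < real n + 1 - \<gamma> * (\<tau> \<omega> + c)"
      using ex_inverse_of_nat_less[of "real n + 1 - \<gamma> * (\<tau> \<omega> + c)"] lt by auto
    have "inverse (real (Suc (j - 1))) < real n + 1 - \<gamma> * (\<tau> \<omega> + c)" using j by simp
    then have "\<gamma> * (\<tau> \<omega> + c) \<le> real n + 1 - 1 / real (Suc (j - 1))"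
      by (simp add: inverse_eq_divide)
    then have "\<tau> \<omega> \<le> t (j - 1)" using g unfolding t_def by (simp only: tau_iff)
    then show "\<omega> \<in> (\<Union>j. {\<omega>\<in>space M. \<tau> \<omega> \<le> t j})" using w by blast
  next
    fix \<omega> assume "\<omega> \<in> (\<Union>j. {\<omega>\<in>space M. \<tau> \<omega> \<le> t j})"
    then obtain j where w: "\<omega> \<in> space M" and le: "\<tau> \<omega> \<le> t j" by auto
    then have "\<gamma> * (\<tau> \<omega> + c) \<le> real n + 1 - 1 / real (Suc j)"
      using g unfolding t_def by (simp only: tau_iff)
    moreover have "0 < 1 / real (Suc j)" by simp
    ultimately have "\<gamma> * (\<tau> \<omega> + c) < real n + 1" by linarith
    then have "nat \<lfloor>\<gamma> * (\<tau> \<omega> + c)\<rfloor> \<le> n" by linarith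
    then show "\<omega> \<in> {\<omega>\<in>space M. nat \<lfloor>\<gamma> * (\<tau> \<omega> + c)\<rfloor> \<le> n}" using w by blast
  qed
  have "{\<omega>\<in>space M. nat \<lfloor>\<gamma> * (\<tau> \<omega> + c)\<rfloor> \<le> n} \<in> sets ?VA"
    unfolding eq using mem by (intro sets.countable_UN) auto
  then obtain B where B: "B \<in> sets (PiM (Past n) (\<lambda>_. natfun_space))"
    and BE: "{\<omega>\<in>space M. nat \<lfloor>\<gamma> * (\<tau> \<omega> + c)\<rfloor> \<le> n} = V (Past n) -` B \<inter> space M"
    unfolding sets_vimage_algebra2[OF Vsp] by blast
  show ?thesis
  proof (intro bexI[OF _ B] ballI)
    fix \<omega> assume "\<omega> \<in> space M"
    then show "(nat \<lfloor>\<gamma> * (\<tau> \<omega> + c)\<rfloor> \<le> n) = (V (Past n) \<omega> \<in> B)"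
      using BE by blast
  qed
qed


lemma S_meas:
  fixes S :: "'a \<Rightarrow> nat"
  assumes Sst: "\<And>n. \<exists>B\<in>sets (PiM (Past n) (\<lambda>_. natfun_space)). \<forall>\<omega>\<in>space M. (S \<omega> \<le> n \<longleftrightarrow> V (Past n) \<omega> \<in> B)"
  shows "S \<in> measurable M (count_space UNIV)"
proof -
  have Sle: "{\<omega>\<in>space M. S \<omega> \<le> n} \<in> sets M" for n
  proof -
    obtain B where B: "B \<in> sets (PiM (Past n) (\<lambda>_. natfun_space))"
      "\<forall>\<omega>\<in>space M. (S \<omega> \<le> n \<longleftrightarrow> V (Past n) \<omega> \<in> B)" using Sst[of n] by blast
    have "{\<omega>\<in>space M. S \<omega> \<le> n} = V (Past n) -` B \<inter> space M" using B(2) by auto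
    also have "\<dots> \<in> sets M" by (rule measurable_sets[OF V_meas[OF Past_src] B(1)])
    finally show ?thesis .
  qed
  show ?thesis
    unfolding measurable_count_space_eq2_countable
  proof safe
    fix j
    show "S -` {j} \<inter> space M \<in> sets M"
    proof (cases j)
      case 0
      then have "S -` {j} \<inter> space M = {\<omega>\<in>space M. S \<omega> \<le> 0}" by auto
      then show ?thesis using Sle[of 0] by (simp only:)
    next
      case (Suc j')
      then have "S -` {j} \<inter> space M = {\<omega>\<in>space M. S \<omega> \<le> j} - {\<omega>\<in>space M. S \<omega> \<le> j'}" by auto
      then show ?thesis using Sle by auto
    qed
  qed auto
qed

lemma final_bound:
  fixes k :: nat and \<gamma> L0 K1 C0 T c :: real and \<tau> :: "'a \<Rightarrow> real"
  assumes k: "1 \<le> k" and g: "0 < \<gamma>" and L0: "0 \<le> L0" and K1: "0 \<le> K1" and C0: "0 \<le> C0" and T: "0 \<le> T"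
    and Bxi: "\<And>n i. 1 \<le> i \<Longrightarrow> (\<integral>\<^sup>+\<omega>. of_nat (\<xi> n i \<omega>) \<partial>M) \<le> ennreal (1 + L0 / \<gamma>)"
    and Bp: "\<And>n z. (\<integral>\<^sup>+\<omega>. of_nat (\<psi> n z \<omega>) \<partial>M) \<le> ennreal (K1 / \<gamma>) * (ennreal (real k) + of_nat z)"
    and st: "stopping_time (nat_filtration M (\<lambda>t. Yproc k \<gamma> Z t)) \<tau>"
    and c: "0 \<le> c" and \<tau>c: "\<And>\<omega>. \<omega> \<in> space M \<Longrightarrow> \<tau> \<omega> + c \<le> T"
    and D0: "(\<integral>\<^sup>+\<omega>. ennreal (real (Z0 \<omega>) / real k) \<partial>M) \<le> ennreal C0"
  shows "(\<integral>\<^sup>+\<omega>. ennreal (Yproc k \<gamma> Z (\<tau> \<omega> + c) \<omega>) \<partial>M) \<le> ennreal (exp ((L0 + K1) * T) * (C0 + 1))"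
proof -
  define a where "a = (1 + L0 / \<gamma>) * (1 + K1 / \<gamma>)"
  define \<kappa> where "\<kappa> = ennreal (real k)"
  define N where "N = nat \<lfloor>\<gamma> * T\<rfloor>"
  define S where "S \<omega> = nat \<lfloor>\<gamma> * (\<tau> \<omega> + c)\<rfloor>" for \<omega>
  have a1: "1 \<le> a"
  proof -
    have "1 \<le> 1 + L0 / \<gamma>" "1 \<le> 1 + K1 / \<gamma>" using g L0 K1 by auto
    then have "1 * 1 \<le> (1 + L0 / \<gamma>) * (1 + K1 / \<gamma>)" by (intro mult_mono) auto
    then show ?thesis by (simp add: a_def)
  qed
  have aenn: "ennreal (1 + L0 / \<gamma>) * (1 + ennreal (K1 / \<gamma>)) = ennreal a"
  proof -
    have "1 + ennreal (K1 / \<gamma>) = ennreal (1 + K1 / \<gamma>)" using g K1 by simp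
    then show ?thesis unfolding a_def using g L0 K1 by (simp add: ennreal_mult)
  qed
  have KEY: "\<And>n B. B \<in> sets (PiM (Past n) (\<lambda>_. natfun_space)) \<Longrightarrow>
      (\<integral>\<^sup>+\<omega>. indicator B (V (Past n) \<omega>) * (of_nat (Z (Suc n) \<omega>) + \<kappa>) \<partial>M)
      \<le> ennreal a * (\<integral>\<^sup>+\<omega>. indicator B (V (Past n) \<omega>) * (of_nat (Z n \<omega>) + \<kappa>) \<partial>M)"
  proof -
    fix n B assume B: "B \<in> sets (PiM (Past n) (\<lambda>_. natfun_space))"
    have "1 \<le> ennreal (1 + L0 / \<gamma>)" using g L0 by simp
    from key[OF B Bxi Bp[unfolded \<kappa>_def[symmetric]] this]
    show "(\<integral>\<^sup>+\<omega>. indicator B (V (Past n) \<omega>) * (of_nat (Z (Suc n) \<omega>) + \<kappa>) \<partial>M)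
      \<le> ennreal a * (\<integral>\<^sup>+\<omega>. indicator B (V (Past n) \<omega>) * (of_nat (Z n \<omega>) + \<kappa>) \<partial>M)"
      by (simp add: aenn)
  qed
  have Sst: "\<exists>B\<in>sets (PiM (Past n) (\<lambda>_. natfun_space)). \<forall>\<omega>\<in>space M. (S \<omega> \<le> n \<longleftrightarrow> V (Past n) \<omega> \<in> B)" for n
    unfolding S_def by (rule stop_disc[OF g c st])
  have Sb: "S \<omega> \<le> N" if "\<omega> \<in> space M" for \<omega>
  proof -
    have "\<gamma> * (\<tau> \<omega> + c) \<le> \<gamma> * T" using \<tau>c[OF that] g by (simp add: mult_left_mono)
    then show ?thesis unfolding S_def N_def by (intro nat_mono floor_mono)
  qed
  have opt: "(\<integral>\<^sup>+\<omega>. of_nat (Z (S \<omega>) \<omega>) + \<kappa> \<partial>M) \<le> ennreal (a ^ N) * (\<integral>\<^sup>+\<omega>. of_nat (Z0 \<omega>) + \<kappa> \<partial>M)"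
    by (rule optional[OF KEY Sst Sb a1])
  have Sm: "S \<in> measurable M (count_space UNIV)" by (rule S_meas[OF Sst])
  have ZSm: "(\<lambda>\<omega>. of_nat (Z (S \<omega>) \<omega>) :: ennreal) \<in> borel_measurable M"
    using measurable_compose_countable[OF Zn_borel Sm] by simp
  have Z0m: "(\<lambda>\<omega>. ennreal (real (Z0 \<omega>) / real k)) \<in> borel_measurable M"
  proof -
    have "(\<lambda>\<omega>. of_nat (Z 0 \<omega>) :: ennreal) \<in> borel_measurable M" by (rule Zn_borel)
    have "Z 0 \<in> measurable M (count_space UNIV)" by (rule Z_meas)
    then show ?thesis using nat_fun_meas[of "Z 0" M "\<lambda>z. ennreal (real z / real k)"] by simp
  qed
  have kpos: "0 < real k" using k by simp
  have Z0eq: "(of_nat (Z0 \<omega>) :: ennreal) = \<kappa> * ennreal (real (Z0 \<omega>) / real k)" for \<omega>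
    unfolding \<kappa>_def using kpos by (simp add: ennreal_mult[symmetric] ennreal_of_nat_eq_real_of_nat)
  have "(\<integral>\<^sup>+\<omega>. of_nat (Z0 \<omega>) + \<kappa> \<partial>M) = (\<integral>\<^sup>+\<omega>. \<kappa> * ennreal (real (Z0 \<omega>) / real k) \<partial>M) + \<kappa>"
    unfolding Z0eq using Z0m by (subst nn_integral_add) (auto simp: emeasure_space_1)
  also have "\<dots> = \<kappa> * (\<integral>\<^sup>+\<omega>. ennreal (real (Z0 \<omega>) / real k) \<partial>M) + \<kappa>"
    by (simp add: nn_integral_cmult[OF Z0m])
  also have "\<dots> \<le> \<kappa> * ennreal C0 + \<kappa>"
    by (intro add_right_mono mult_left_mono D0) auto
  also have "\<dots> = ennreal (real k * (C0 + 1))"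
    unfolding \<kappa>_def using C0 by (simp add: ennreal_mult distrib_left)
  finally have I0: "(\<integral>\<^sup>+\<omega>. of_nat (Z0 \<omega>) + \<kappa> \<partial>M) \<le> ennreal (real k * (C0 + 1))" .
  have "(\<integral>\<^sup>+\<omega>. of_nat (Z (S \<omega>) \<omega>) \<partial>M) \<le> (\<integral>\<^sup>+\<omega>. of_nat (Z (S \<omega>) \<omega>) + \<kappa> \<partial>M)"
    by (intro nn_integral_mono) simp
  also have "\<dots> \<le> ennreal (a ^ N) * ennreal (real k * (C0 + 1))"
    using opt I0 by (meson mult_left_mono order_trans zero_le)
  finally have IS: "(\<integral>\<^sup>+\<omega>. of_nat (Z (S \<omega>) \<omega>) \<partial>M) \<le> ennreal (a ^ N * (real k * (C0 + 1)))"
    using a1 C0 by (simp add: ennreal_mult)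
  have aN: "a ^ N \<le> exp ((L0 + K1) * T)"
  proof -
    have "a \<le> exp (L0 / \<gamma>) * exp (K1 / \<gamma>)"
      unfolding a_def using g L0 K1 by (intro mult_mono) auto
    also have "\<dots> = exp ((L0 + K1) / \<gamma>)" by (simp add: exp_add[symmetric] add_divide_distrib)
    finally have "a ^ N \<le> exp ((L0 + K1) / \<gamma>) ^ N" using a1 by (intro power_mono) auto
    also have "\<dots> = exp (real N * ((L0 + K1) / \<gamma>))" by (rule exp_of_nat_mult[symmetric])
    also have "\<dots> \<le> exp ((L0 + K1) * T)"
    proof -
      have "real N \<le> \<gamma> * T" unfolding N_def using g T by simp
      then have "real N * ((L0 + K1) / \<gamma>) \<le> (\<gamma> * T) * ((L0 + K1) / \<gamma>)"
        using L0 K1 g by (intro mult_right_mono) auto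
      also have "\<dots> = (L0 + K1) * T" using g by simp
      finally show ?thesis by simp
    qed
    finally show ?thesis .
  qed
  have "(\<integral>\<^sup>+\<omega>. ennreal (Yproc k \<gamma> Z (\<tau> \<omega> + c) \<omega>) \<partial>M) = (\<integral>\<^sup>+\<omega>. ennreal (1 / real k) * of_nat (Z (S \<omega>) \<omega>) \<partial>M)"
    using kpos by (intro nn_integral_cong) (simp add: Yproc_def S_def ennreal_mult[symmetric] ennreal_of_nat_eq_real_of_nat)
  also have "\<dots> = ennreal (1 / real k) * (\<integral>\<^sup>+\<omega>. of_nat (Z (S \<omega>) \<omega>) \<partial>M)"
    by (rule nn_integral_cmult[OF ZSm])
  also have "\<dots> \<le> ennreal (1 / real k) * ennreal (a ^ N * (real k * (C0 + 1)))"
    by (intro mult_left_mono IS) auto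
  also have "\<dots> = ennreal (a ^ N * (C0 + 1))"
    using kpos a1 C0 by (simp add: ennreal_mult[symmetric])
  also have "\<dots> \<le> ennreal (exp ((L0 + K1) * T) * (C0 + 1))"
    using aN C0 by (intro ennreal_leI mult_right_mono) auto
  finally show ?thesis .
qed

end



lemma pgf_one:
  assumes "prob_space M" "has_pgf M X g" shows "g 1 = 1"
  using assms by (simp add: has_pgf_def prob_space.prob_space)

lemma xi_bound:
  fixes X :: "'a \<Rightarrow> nat" and g :: "real \<Rightarrow> real" and k :: nat
  assumes P: "prob_space M" and Xm: "X \<in> measurable M (count_space UNIV)" and pgf: "has_pgf M X g"
    and k: "1 \<le> k" and g: "0 < \<gamma>" and LL: "L \<le> L0"
    and Lip: "\<forall>x\<in>{0..min 1 (real k)}. \<forall>y\<in>{0..min 1 (real k)}. \<bar>Rk k \<gamma> g x - Rk k \<gamma> g y\<bar> \<le> L * \<bar>x - y\<bar>"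
  shows "(\<integral>\<^sup>+\<omega>. of_nat (X \<omega>) \<partial>M) \<le> ennreal (1 + L0 / \<gamma>)"
proof (rule pgf_mean_bound[OF P Xm pgf])
  fix e :: real assume e: "0 < e"
  have g1: "g 1 = 1" by (rule pgf_one[OF P pgf])
  have kpos: "0 < real k" using k by simp
  show "\<exists>s0<1. \<forall>s. s0 < s \<and> s < 1 \<longrightarrow> 1 - g s \<le> (1 + L0 / \<gamma> + e) * (1 - s)"
  proof (intro exI[of _ "1 - 1 / real k"] conjI allI impI)
    show "1 - 1 / real k < 1" using kpos by simp
    fix s assume s: "1 - 1 / real k < s \<and> s < 1"
    define l where "l = real k * (1 - s)"
    have l0: "0 \<le> l" using s kpos by (simp add: l_def)
    have l1: "l \<le> 1"
    proof -
      have "1 - s < 1 / real k" using s by simp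
      then have "real k * (1 - s) < real k * (1 / real k)" using kpos by (intro mult_strict_left_mono)
      then show ?thesis using kpos by (simp add: l_def)
    qed
    have lk: "l \<le> real k" using l1 k by simp
    have lin: "l \<in> {0..min 1 (real k)}" "0 \<in> {0..min 1 (real k)}" using l0 l1 lk k by auto
    have "\<bar>Rk k \<gamma> g l - Rk k \<gamma> g 0\<bar> \<le> L * \<bar>l - 0\<bar>"
      using Lip lin by blast
    moreover have "Rk k \<gamma> g 0 = 0" by (simp add: Rk_def g1)
    moreover have sl: "1 - l / real k = s" using kpos by (simp add: l_def)
    moreover have "Rk k \<gamma> g l = real k * \<gamma> * (g s - s)" unfolding Rk_def sl ..
    ultimately have "\<bar>real k * \<gamma> * (g s - s)\<bar> \<le> L * l" using l0 by simp
    moreover have "real k * \<gamma> * (s - g s) = - (real k * \<gamma> * (g s - s))" by (simp add: algebra_simps)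
    ultimately have A1: "real k * \<gamma> * (s - g s) \<le> L * l" by linarith
    have "L * l \<le> L0 * l" using LL l0 by (rule mult_right_mono)
    with A1 have "real k * (\<gamma> * (s - g s)) \<le> real k * (L0 * (1 - s))"
      unfolding l_def by (simp only: mult.assoc mult.left_commute[of L0])
    then have "\<gamma> * (s - g s) \<le> L0 * (1 - s)"
      using kpos by (rule mult_le_cancel_left_pos[THEN iffD1, rotated])
    then have "(s - g s) \<le> L0 * (1 - s) / \<gamma>"
      using g by (simp add: pos_le_divide_eq mult.commute)
    then have "s - g s \<le> L0 / \<gamma> * (1 - s)" by simp
    moreover have "0 \<le> e * (1 - s)" using e s by simp
    ultimately show "1 - g s \<le> (1 + L0 / \<gamma> + e) * (1 - s)"
      by (simp add: algebra_simps)
  qed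
qed

lemma psi_bound:
  fixes X :: "'a \<Rightarrow> nat" and h :: "real \<Rightarrow> real"
  assumes P: "prob_space M" and Xm: "X \<in> measurable M (count_space UNIV)" and pgf: "has_pgf M X h"
    and D: "(h has_real_derivative D) (at_left 1)"
  shows "(\<integral>\<^sup>+\<omega>. of_nat (X \<omega>) \<partial>M) \<le> ennreal D"
proof (rule pgf_mean_bound[OF P Xm pgf])
  fix e :: real assume e: "0 < e"
  have h1: "h 1 = 1" by (rule pgf_one[OF P pgf])
  have "((\<lambda>y. (h y - h 1) / (y - 1)) \<longlongrightarrow> D) (at_left 1)"
    using D unfolding has_field_derivative_iff .
  then have "eventually (\<lambda>y. dist ((h y - h 1) / (y - 1)) D < e) (at_left (1::real))"
    using e by (rule tendstoD)
  then obtain b where b: "b < 1" "\<forall>y>b. y < 1 \<longrightarrow> dist ((h y - h 1) / (y - 1)) D < e"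
    unfolding eventually_at_left_field by blast
  show "\<exists>s0<1. \<forall>s. s0 < s \<and> s < 1 \<longrightarrow> 1 - h s \<le> (D + e) * (1 - s)"
  proof (intro exI[of _ b] conjI allI impI b(1))
    fix s assume s: "b < s \<and> s < 1"
    then have "dist ((h s - 1) / (s - 1)) D < e" using b(2) h1 by auto
    moreover have "(h s - 1) / (s - 1) = (1 - h s) / (1 - s)"
      by (metis minus_diff_eq minus_divide_divide)
    ultimately have "(1 - h s) / (1 - s) < D + e" unfolding dist_real_def by linarith
    moreover have "0 < 1 - s" using s by simp
    ultimately have "1 - h s < (D + e) * (1 - s)" by (simp only: pos_divide_less_eq)
    then show "1 - h s \<le> (D + e) * (1 - s)" by simp
  qed
qed

theorem lemma3p4:
  fixes M :: "nat \<Rightarrow> 'a measure"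
    and \<xi> :: "nat \<Rightarrow> nat \<Rightarrow> nat \<Rightarrow> 'a \<Rightarrow> nat"
    and \<psi> :: "nat \<Rightarrow> nat \<Rightarrow> nat \<Rightarrow> 'a \<Rightarrow> nat"
    and Z0 :: "nat \<Rightarrow> 'a \<Rightarrow> nat"
    and g :: "nat \<Rightarrow> real \<Rightarrow> real"
    and h :: "nat \<Rightarrow> nat \<Rightarrow> real \<Rightarrow> real"
    and \<gamma> :: "nat \<Rightarrow> real"
    and b c :: real and m :: "real measure"
    and T :: real and \<delta> :: "nat \<Rightarrow> real" and \<tau> :: "nat \<Rightarrow> 'a \<Rightarrow> real"
  assumes prob: "\<And>k. 1 \<le> k \<Longrightarrow> prob_space (M k)"
    and meas_xi: "\<And>k n i. 1 \<le> k \<Longrightarrow> \<xi> k n i \<in> measurable (M k) (count_space UNIV)"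
    and meas_psi: "\<And>k n. 1 \<le> k \<Longrightarrow> (\<lambda>\<omega> i. \<psi> k n i \<omega>) \<in> measurable (M k) natfun_space"
    and meas_Z0: "\<And>k. 1 \<le> k \<Longrightarrow> Z0 k \<in> measurable (M k) (count_space UNIV)"
    and indep: "\<And>k. 1 \<le> k \<Longrightarrow>
         prob_space.indep_vars (M k) (\<lambda>_. natfun_space) (src_var (\<xi> k) (\<psi> k) (Z0 k)) src_index"
    and pgf_xi: "\<And>k n i. 1 \<le> k \<Longrightarrow> 1 \<le> i \<Longrightarrow> has_pgf (M k) (\<xi> k n i) (g k)"
    and ident_psi: "\<And>k n. 1 \<le> k \<Longrightarrow>
         distr (M k) natfun_space (\<lambda>\<omega> i. \<psi> k n i \<omega>) = distr (M k) natfun_space (\<lambda>\<omega> i. \<psi> k 0 i \<omega>)"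
    and pgf_psi: "\<And>k n i. 1 \<le> k \<Longrightarrow> has_pgf (M k) (\<psi> k n i) (h k i)"
    and gamma_pos: "\<And>k. 0 < \<gamma> k"
    and gamma_mono: "mono \<gamma>"
    and gamma_lim: "filterlim \<gamma> at_top sequentially"
    and c_nonneg: "0 \<le> c"
    and m_sets: "sets m = sets borel"
    and m_supp: "emeasure m {..0} = 0"
    and m_int: "(\<integral>\<^sup>+z. ennreal (min z (z\<^sup>2)) \<partial>m) < \<infinity>"
    and A_lip: "\<And>a. 0 \<le> a \<Longrightarrow> \<exists>L. \<forall>k\<ge>1. \<forall>x\<in>{0..min a (real k)}. \<forall>y\<in>{0..min a (real k)}.
                  \<bar>Rk k (\<gamma> k) (g k) x - Rk k (\<gamma> k) (g k) y\<bar> \<le> L * \<bar>x - y\<bar>"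
    and A_conv: "\<And>l. 0 \<le> l \<Longrightarrow> (\<lambda>k. Rk k (\<gamma> k) (g k) l) \<longlonglongrightarrow> Rlim b c m l"
    and C: "\<exists>K1>0. \<forall>k\<ge>1. \<forall>x\<ge>0. \<exists>D.
              (h k (nat \<lfloor>real k * x\<rfloor>) has_real_derivative D) (at_left 1) \<and>
              \<gamma> k / real k * D \<le> K1 * (1 + x)"
    and D: "\<exists>C. \<forall>k\<ge>1. (\<integral>\<^sup>+\<omega>. ennreal (real (Z0 k \<omega>) / real k) \<partial>M k) \<le> ennreal C"
    and T_pos: "0 < T"
    and delta_pos: "\<And>k. 0 < \<delta> k"
    and delta_lim: "\<delta> \<longlonglongrightarrow> 0"
    and stop: "\<And>k. 1 \<le> k \<Longrightarrow> stopping_time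
         (nat_filtration (M k) (\<lambda>t. Yproc k (\<gamma> k) (Zproc (\<xi> k) (\<psi> k) (Z0 k)) t)) (\<tau> k)"
    and tau_bounds: "\<And>k \<omega>. 1 \<le> k \<Longrightarrow> \<omega> \<in> space (M k) \<Longrightarrow> 0 \<le> \<tau> k \<omega> \<and> \<tau> k \<omega> + \<delta> k \<le> T"
  shows "\<exists>K3\<ge>0. \<forall>k\<ge>1.
     (\<integral>\<^sup>+\<omega>. ennreal (Yproc k (\<gamma> k) (Zproc (\<xi> k) (\<psi> k) (Z0 k)) (\<tau> k \<omega>) \<omega>) \<partial>M k) \<le> ennreal K3 \<and>
     (\<integral>\<^sup>+\<omega>. ennreal (Yproc k (\<gamma> k) (Zproc (\<xi> k) (\<psi> k) (Z0 k)) (\<tau> k \<omega> + \<delta> k) \<omega>) \<partial>M k) \<le> ennreal K3"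
proof -
  obtain K1 where K1: "K1 > 0" "\<forall>k\<ge>1. \<forall>x\<ge>0. \<exists>D.
              (h k (nat \<lfloor>real k * x\<rfloor>) has_real_derivative D) (at_left 1) \<and>
              \<gamma> k / real k * D \<le> K1 * (1 + x)" using C by blast
  obtain C0 where C0: "\<forall>k\<ge>1. (\<integral>\<^sup>+\<omega>. ennreal (real (Z0 k \<omega>) / real k) \<partial>M k) \<le> ennreal C0"
    using D by blast
  obtain L where L: "\<forall>k\<ge>1. \<forall>x\<in>{0..min 1 (real k)}. \<forall>y\<in>{0..min 1 (real k)}.
                  \<bar>Rk k (\<gamma> k) (g k) x - Rk k (\<gamma> k) (g k) y\<bar> \<le> L * \<bar>x - y\<bar>"
    using A_lip[of 1] by auto
  define L0 where "L0 = max L 0"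
  define C1 where "C1 = max C0 0"
  define K3 where "K3 = exp ((L0 + K1) * T) * (C1 + 1)"
  have L0: "0 \<le> L0" "L \<le> L0" by (auto simp: L0_def)
  have C1: "0 \<le> C1" "C0 \<le> C1" by (auto simp: C1_def)
  have K3: "0 \<le> K3" unfolding K3_def using C1 by simp
  show ?thesis
  proof (intro exI[of _ K3] conjI K3 allI impI)
    fix k :: nat assume k: "1 \<le> k"
    interpret B: bp "M k" "\<xi> k" "\<psi> k" "Z0 k"
      using prob[OF k] indep[OF k] by (simp add: bp_def bp_axioms_def)
    have g: "0 < \<gamma> k" by (rule gamma_pos)
    have Bxi: "\<And>n i. 1 \<le> i \<Longrightarrow> (\<integral>\<^sup>+\<omega>. of_nat (\<xi> k n i \<omega>) \<partial>M k) \<le> ennreal (1 + L0 / \<gamma> k)"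
      by (rule xi_bound[OF prob[OF k] meas_xi[OF k] pgf_xi[OF k] k g L0(2)]) (use L k in auto)
    have Bp: "(\<integral>\<^sup>+\<omega>. of_nat (\<psi> k n z \<omega>) \<partial>M k) \<le> ennreal (K1 / \<gamma> k) * (ennreal (real k) + of_nat z)" for n z
    proof -
      have kpos: "0 < real k" using k by simp
      define x where "x = real z / real k"
      have x0: "0 \<le> x" by (simp add: x_def)
      have xz: "nat \<lfloor>real k * x\<rfloor> = z" using kpos by (simp add: x_def)
      obtain Dv where Dv: "(h k z has_real_derivative Dv) (at_left 1)" "\<gamma> k / real k * Dv \<le> K1 * (1 + x)"
        using K1(2) k x0 xz by metis
      have psim: "\<psi> k n z \<in> measurable (M k) (count_space UNIV)"
        using measurable_compose[OF meas_psi[OF k] measurable_component_singleton[of z UNIV "\<lambda>_. count_space UNIV"]]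
        by simp
      have I: "(\<integral>\<^sup>+\<omega>. of_nat (\<psi> k n z \<omega>) \<partial>M k) \<le> ennreal Dv"
        by (rule psi_bound[OF prob[OF k] psim pgf_psi[OF k] Dv(1)])
      have "Dv \<le> K1 / \<gamma> k * (real k + real z)"
      proof -
        have "\<gamma> k * Dv \<le> real k * (K1 * (1 + x))"
          using Dv(2) kpos by (simp add: pos_divide_le_eq mult.commute)
        also have "real k * (K1 * (1 + x)) = K1 * (real k + real z)"
          using kpos by (simp add: x_def algebra_simps)
        finally have "\<gamma> k * Dv \<le> K1 * (real k + real z)" .
        then show ?thesis using g by (simp add: pos_le_divide_eq mult.commute)
      qed
      then have "ennreal Dv \<le> ennreal (K1 / \<gamma> k * (real k + real z))" by (rule ennreal_leI)
      also have "\<dots> = ennreal (K1 / \<gamma> k) * ennreal (real k + real z)"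
        using K1(1) g by (intro ennreal_mult) auto
      also have "\<dots> = ennreal (K1 / \<gamma> k) * (ennreal (real k) + of_nat z)"
        by (simp add: ennreal_of_nat_eq_real_of_nat)
      finally show ?thesis using I by simp
    qed
    have T0: "0 \<le> T" using T_pos by simp
    have D0: "(\<integral>\<^sup>+\<omega>. ennreal (real (Z0 k \<omega>) / real k) \<partial>M k) \<le> ennreal C1"
      using C0 k C1(2) by (meson ennreal_leI order_trans)
    have st: "stopping_time (nat_filtration (M k) (\<lambda>t. Yproc k (\<gamma> k) (Zproc (\<xi> k) (\<psi> k) (Z0 k)) t)) (\<tau> k)"
      by (rule stop[OF k])
    have tb0: "\<tau> k \<omega> + 0 \<le> T" if "\<omega> \<in> space (M k)" for \<omega>
      using tau_bounds[OF k that] delta_pos[of k] by simp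
    have tb1: "\<tau> k \<omega> + \<delta> k \<le> T" if "\<omega> \<in> space (M k)" for \<omega>
      using tau_bounds[OF k that] by simp
    have r0: "(\<integral>\<^sup>+\<omega>. ennreal (Yproc k (\<gamma> k) (Zproc (\<xi> k) (\<psi> k) (Z0 k)) (\<tau> k \<omega> + 0) \<omega>) \<partial>M k) \<le> ennreal K3"
      unfolding K3_def
      by (rule B.final_bound[OF k g L0(1) less_imp_le[OF K1(1)] C1(1) T0 Bxi Bp st order_refl tb0 D0])
    have r1: "(\<integral>\<^sup>+\<omega>. ennreal (Yproc k (\<gamma> k) (Zproc (\<xi> k) (\<psi> k) (Z0 k)) (\<tau> k \<omega> + \<delta> k) \<omega>) \<partial>M k) \<le> ennreal K3"
      unfolding K3_def
      by (rule B.final_bound[OF k g L0(1) less_imp_le[OF K1(1)] C1(1) T0 Bxi Bp st less_imp_le[OF delta_pos] tb1 D0])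
    show "(\<integral>\<^sup>+\<omega>. ennreal (Yproc k (\<gamma> k) (Zproc (\<xi> k) (\<psi> k) (Z0 k)) (\<tau> k \<omega>) \<omega>) \<partial>M k) \<le> ennreal K3"
      using r0 by simp
    show "(\<integral>\<^sup>+\<omega>. ennreal (Yproc k (\<gamma> k) (Zproc (\<xi> k) (\<psi> k) (Z0 k)) (\<tau> k \<omega> + \<delta> k) \<omega>) \<partial>M k) \<le> ennreal K3"
      by (rule r1)
  qed
qed

end
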